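(* Let $I\subseteq V$ with $|I|=5$ such that the induced subgraph $G_I$ is a cycle of length 5. Let $X_I$ be a symmetric matrix indexed by $I$ with $X_I\succeq 0$, $X_I\geq 0$ (entrywise), diagonal entries $x_i$ ($i\in I$), and $X_{i,j}=0$ for every edge $[i,j]$ of $G_I$. Suppose that (i) for every nonempty clique $C_1\subseteq I$ of $G_I$ and every $j\in I\setminus C_1$: $\sum_{i\in C_1}X_{i,j}\leq x_j$; and (ii) for all disjoint nonempty cliques $C_1,C_2\subseteq I$ of $G_I$: $\sum_{i\in C_1\cup C_2}x_i\leq 1+\sum_{i\in C_1,\,j\in C_2}X_{i,j}$. Then $X_I\in\mathrm{STAB}^2(G_I)$ if and only if $$\sum_{i\in I}x_i\leq 1+\sum_{\{i,j\}\in N}X_{i,j},$$ where $N$ is the set of the five unordered pairs of distinct nonadjacent vertices of $G_I$.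
   Context: Let $G$ be a simple graph with vertex set $V=\{1,\dots,n\}$ and edge set $E$; $G_I$ denotes the subgraph induced by $I\subseteq V$. For a graph $H$ with vertex set $I$, let $S(H)=\{s\in\{0,1\}^I: s_is_j=0\ \forall [i,j]\in E(H)\}$ (incidence vectors of stable sets, including the zero vector) and $\mathrm{STAB}^2(H)=\operatorname{conv}\{ss^T: s\in S(H)\}$. *)

theory Defs
  imports "HOL-Analysis.Analysis"
begin

definition simple_graph :: "nat \<Rightarrow> (nat \<Rightarrow> nat \<Rightarrow> bool) \<Rightarrow> bool" where
  "simple_graph n E \<longleftrightarrow> (\<forall>i j. E i j \<longrightarrow> E j i) \<and> (\<forall>i. \<not> E i i)
     \<and> (\<forall>i j. E i j \<longrightarrow> i \<in> {1..n} \<and> j \<in> {1..n})"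

definition induced_C5 :: "(nat \<Rightarrow> nat \<Rightarrow> bool) \<Rightarrow> nat set \<Rightarrow> bool" where
  "induced_C5 E I \<longleftrightarrow> (\<exists>f. bij_betw f {0..<5::nat} I \<and>
     (\<forall>a<5. \<forall>b<5. E (f a) (f b) \<longleftrightarrow> (b = (a + 1) mod 5 \<or> a = (b + 1) mod 5)))"

definition clique_in :: "(nat \<Rightarrow> nat \<Rightarrow> bool) \<Rightarrow> nat set \<Rightarrow> nat set \<Rightarrow> bool" where
  "clique_in E I C \<longleftrightarrow> C \<subseteq> I \<and> (\<forall>i\<in>C. \<forall>j\<in>C. i \<noteq> j \<longrightarrow> E i j)"

definition stab_vecs :: "(nat \<Rightarrow> nat \<Rightarrow> bool) \<Rightarrow> nat set \<Rightarrow> (nat \<Rightarrow> real) set" where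
  "stab_vecs E I = {s. (\<forall>i\<in>I. s i \<in> {0, 1}) \<and> (\<forall>i. i \<notin> I \<longrightarrow> s i = 0)
      \<and> (\<forall>i\<in>I. \<forall>j\<in>I. E i j \<longrightarrow> s i * s j = 0)}"

(* STAB^2(G_I) = conv { s s^T : s in S(G_I) }, matrices indexed by I x I,
   convex hull written out as the set of finite convex combinations *)
definition STAB2 :: "(nat \<Rightarrow> nat \<Rightarrow> bool) \<Rightarrow> nat set \<Rightarrow> (nat \<Rightarrow> nat \<Rightarrow> real) set" where
  "STAB2 E I = {X. \<exists>F c. finite F \<and> F \<subseteq> stab_vecs E I \<and> (\<forall>s\<in>F. c s \<ge> 0) \<and> sum c F = 1 \<and>
      (\<forall>i\<in>I. \<forall>j\<in>I. X i j = (\<Sum>s\<in>F. c s * (s i * s j)))}"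

end

theory Submission imports Defs begin

lemma pairsum:
  fixes Y :: "nat \<Rightarrow> nat \<Rightarrow> real"
  assumes fin: "finite I" and Rs: "\<forall>i j. R i j = R j i" and Ys: "\<forall>i\<in>I. \<forall>j\<in>I. Y i j = Y j i"
  shows "(\<Sum>(i,j)\<in>{(i,j). i\<in>I \<and> j\<in>I \<and> i<j \<and> R i j}. Y i j) * 2
       = (\<Sum>i\<in>I. \<Sum>j\<in>I. if i \<noteq> j \<and> R i j then Y i j else 0)"
proof -
  have e: "{(i,j). i\<in>I \<and> j\<in>I \<and> i<j \<and> R i j} = {x \<in> I \<times> I. fst x < snd x \<and> R (fst x) (snd x)}"
    by auto
  have "(\<Sum>(i,j)\<in>{(i,j). i\<in>I \<and> j\<in>I \<and> i<j \<and> R i j}. Y i j)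
      = (\<Sum>x\<in>I \<times> I. if fst x < snd x \<and> R (fst x) (snd x) then Y (fst x) (snd x) else 0)"
    unfolding e using fin by (subst sum.inter_filter[symmetric]) (auto simp: case_prod_beta)
  also have "\<dots> = (\<Sum>i\<in>I. \<Sum>j\<in>I. if i < j \<and> R i j then Y i j else 0)"
    by (simp add: sum.cartesian_product case_prod_beta)
  finally have A: "(\<Sum>(i,j)\<in>{(i,j). i\<in>I \<and> j\<in>I \<and> i<j \<and> R i j}. Y i j) = (\<Sum>i\<in>I. \<Sum>j\<in>I. if i < j \<and> R i j then Y i j else 0)" .
  have B: "(\<Sum>i\<in>I. \<Sum>j\<in>I. if j < i \<and> R i j then Y i j else 0) = (\<Sum>i\<in>I. \<Sum>j\<in>I. if i < j \<and> R i j then Y i j else 0)"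
  proof -
    have "(\<Sum>i\<in>I. \<Sum>j\<in>I. if j < i \<and> R i j then Y i j else 0) = (\<Sum>j\<in>I. \<Sum>i\<in>I. if j < i \<and> R i j then Y i j else 0)"
      by (rule sum.swap)
    also have "\<dots> = (\<Sum>j\<in>I. \<Sum>i\<in>I. if j < i \<and> R j i then Y j i else 0)"
      using Rs Ys by (intro sum.cong refl) auto
    finally show ?thesis .
  qed
  have C: "(\<Sum>i\<in>I. \<Sum>j\<in>I. if i \<noteq> j \<and> R i j then Y i j else 0)
     = (\<Sum>i\<in>I. \<Sum>j\<in>I. if i < j \<and> R i j then Y i j else 0) + (\<Sum>i\<in>I. \<Sum>j\<in>I. if j < i \<and> R i j then Y i j else 0)"
    by (simp add: sum.distrib[symmetric]) (intro sum.cong refl, auto)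
  show ?thesis using A B C by simp
qed

lemma image_gen_w:
  fixes w :: "nat \<Rightarrow> real"
  assumes "finite K"
  shows "(\<Sum>s\<in>g ` K. (\<Sum>k\<in>{k\<in>K. g k = s}. w k) * q s) = (\<Sum>k\<in>K. w k * q (g k))"
proof -
  have "(\<Sum>k\<in>K. w k * q (g k)) = (\<Sum>s\<in>g ` K. \<Sum>k\<in>{k\<in>K. g k = s}. w k * q (g k))"
    using assms by (rule sum.image_gen)
  also have "\<dots> = (\<Sum>s\<in>g ` K. (\<Sum>k\<in>{k\<in>K. g k = s}. w k) * q s)"
    by (intro sum.cong refl) (simp add: sum_distrib_right)
  finally show ?thesis by simp
qed

lemma "(\<Sum>k\<in>{0..<11::nat}. h k) = h 0 + h 1 + h 2 + h 3 + h 4 + h 5 + h 6 + h 7 + h 8 + h 9 + (h 10 :: real)"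
  by (simp add: eval_nat_numeral atLeast0LessThan)
lemma K11: "{0..<11::nat} = {0,1,2,3,4,5,6,7,8,9,10}" by (auto; presburger)

definition ind :: "nat set \<Rightarrow> nat \<Rightarrow> real" where
  "ind S = (\<lambda>i. if i \<in> S then 1 else 0)"

lemma ind_stab:
  assumes "S \<subseteq> I" "\<forall>i\<in>S. \<forall>j\<in>S. \<not> E i j"
  shows "ind S \<in> stab_vecs E I"
  using assms unfolding stab_vecs_def ind_def by auto

lemma core:
  fixes E :: "nat \<Rightarrow> nat \<Rightarrow> bool" and X :: "nat \<Rightarrow> nat \<Rightarrow> real"
  assumes Ieq: "I = {p0,p1,p2,p3,p4}"
    and dist: "p0\<noteq>p1" "p0\<noteq>p2" "p0\<noteq>p3" "p0\<noteq>p4" "p1\<noteq>p2" "p1\<noteq>p3" "p1\<noteq>p4" "p2\<noteq>p3" "p2\<noteq>p4" "p3\<noteq>p4"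
    and Eadj: "E p0 p1" "E p1 p0" "E p1 p2" "E p2 p1" "E p2 p3" "E p3 p2" "E p3 p4" "E p4 p3" "E p4 p0" "E p0 p4"
    and Enon: "\<not>E p0 p2" "\<not>E p2 p0" "\<not>E p0 p3" "\<not>E p3 p0" "\<not>E p1 p3" "\<not>E p3 p1" "\<not>E p1 p4" "\<not>E p4 p1" "\<not>E p2 p4" "\<not>E p4 p2"
    and Eirr: "\<not>E p0 p0" "\<not>E p1 p1" "\<not>E p2 p2" "\<not>E p3 p3" "\<not>E p4 p4"
    and Esym: "\<forall>i j. E i j = E j i"
    and sym: "\<forall>i\<in>I. \<forall>j\<in>I. X i j = X j i"
    and nonneg: "\<forall>i\<in>I. \<forall>j\<in>I. X i j \<ge> 0"
    and edge0: "\<forall>i\<in>I. \<forall>j\<in>I. E i j \<longrightarrow> X i j = 0"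
    and cond_i: "\<forall>C1 j. clique_in E I C1 \<and> C1 \<noteq> {} \<and> j \<in> I - C1 \<longrightarrow>
                   (\<Sum>i\<in>C1. X i j) \<le> X j j"
  shows "X \<in> STAB2 E I \<longleftrightarrow>
           (\<Sum>i\<in>I. X i i) \<le> 1 + (\<Sum>(i, j)\<in>{(i, j). i \<in> I \<and> j \<in> I \<and> i < j \<and> \<not> E i j}. X i j)"
proof -
  have fin: "finite I" using Ieq by simp
  have pI: "p0 \<in> I" "p1 \<in> I" "p2 \<in> I" "p3 \<in> I" "p4 \<in> I" using Ieq by auto
  have PS: "(\<Sum>(i, j)\<in>{(i, j). i \<in> I \<and> j \<in> I \<and> i < j \<and> \<not> E i j}. Y i j)
      = Y p0 p2 + Y p0 p3 + Y p1 p3 + Y p1 p4 + Y p2 p4"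
    if Ys: "\<forall>i\<in>I. \<forall>j\<in>I. Y i j = Y j i" for Y :: "nat \<Rightarrow> nat \<Rightarrow> real"
  proof -
    have "\<forall>i j. (\<not> E i j) = (\<not> E j i)" using Esym by blast
    from pairsum[OF fin this Ys]
    have "(\<Sum>(i, j)\<in>{(i, j). i \<in> I \<and> j \<in> I \<and> i < j \<and> \<not> E i j}. Y i j) * 2
       = Y p0 p2 + Y p0 p3 + Y p1 p3 + Y p1 p4 + Y p2 p4
         + (Y p2 p0 + Y p3 p0 + Y p3 p1 + Y p4 p1 + Y p4 p2)"
      by (simp add: Ieq dist dist[symmetric] Eadj Enon Eirr)
    moreover have "Y p2 p0 = Y p0 p2" "Y p3 p0 = Y p0 p3" "Y p3 p1 = Y p1 p3" "Y p4 p1 = Y p1 p4" "Y p4 p2 = Y p2 p4"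
      using Ys[rule_format, OF pI(3) pI(1)] Ys[rule_format, OF pI(4) pI(1)] Ys[rule_format, OF pI(4) pI(2)]
        Ys[rule_format, OF pI(5) pI(2)] Ys[rule_format, OF pI(5) pI(3)] by simp_all
    ultimately show ?thesis by linarith
  qed
  have SI: "(\<Sum>i\<in>I. h i) = h p0 + h p1 + h p2 + h p3 + h p4" for h :: "nat \<Rightarrow> real"
    by (simp add: Ieq dist dist[symmetric] add.assoc)
  have PX: "(\<Sum>(i, j)\<in>{(i, j). i \<in> I \<and> j \<in> I \<and> i < j \<and> \<not> E i j}. X i j)
      = X p0 p2 + X p0 p3 + X p1 p3 + X p1 p4 + X p2 p4"
    by (rule PS[OF sym])
  show ?thesis
  proof
    assume "X \<in> STAB2 E I"
    then obtain F c where F: "finite F" "F \<subseteq> stab_vecs E I" "\<forall>s\<in>F. c s \<ge> 0" "sum c F = 1"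
      and Xe: "\<forall>i\<in>I. \<forall>j\<in>I. X i j = (\<Sum>s\<in>F. c s * (s i * s j))"
      unfolding STAB2_def by blast
    have L: "(\<Sum>i\<in>I. X i i) = (\<Sum>s\<in>F. c s * (s p0 * s p0 + s p1 * s p1 + s p2 * s p2 + s p3 * s p3 + s p4 * s p4))"
      unfolding SI using Xe pI by (simp add: sum.distrib[symmetric] distrib_left)
    have R: "1 + (X p0 p2 + X p0 p3 + X p1 p3 + X p1 p4 + X p2 p4)
       = (\<Sum>s\<in>F. c s * (1 + (s p0 * s p2 + s p0 * s p3 + s p1 * s p3 + s p1 * s p4 + s p2 * s p4)))"
      using Xe pI F(4) by (simp add: sum.distrib distrib_left)
    have "(\<Sum>s\<in>F. c s * (s p0 * s p0 + s p1 * s p1 + s p2 * s p2 + s p3 * s p3 + s p4 * s p4))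
       \<le> (\<Sum>s\<in>F. c s * (1 + (s p0 * s p2 + s p0 * s p3 + s p1 * s p3 + s p1 * s p4 + s p2 * s p4)))"
    proof (rule sum_mono)
      fix s assume sF: "s \<in> F"
      then have sv: "s \<in> stab_vecs E I" using F(2) by auto
      have v: "s p0 \<in> {0,1}" "s p1 \<in> {0,1}" "s p2 \<in> {0,1}" "s p3 \<in> {0,1}" "s p4 \<in> {0,1}"
        using sv pI unfolding stab_vecs_def by auto
      have z: "s p0 * s p1 = 0" "s p1 * s p2 = 0" "s p2 * s p3 = 0" "s p3 * s p4 = 0" "s p4 * s p0 = 0"
        using sv pI Eadj unfolding stab_vecs_def by auto
      have "s p0 * s p0 + s p1 * s p1 + s p2 * s p2 + s p3 * s p3 + s p4 * s p4
         \<le> 1 + (s p0 * s p2 + s p0 * s p3 + s p1 * s p3 + s p1 * s p4 + s p2 * s p4)"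
        using v z by (simp only: insert_iff empty_iff simp_thms, elim disjE) (simp_all)
      then show "c s * (s p0 * s p0 + s p1 * s p1 + s p2 * s p2 + s p3 * s p3 + s p4 * s p4)
         \<le> c s * (1 + (s p0 * s p2 + s p0 * s p3 + s p1 * s p3 + s p1 * s p4 + s p2 * s p4))"
        using F(3) sF by (intro mult_left_mono) auto
    qed
    then show "(\<Sum>i\<in>I. X i i) \<le> 1 + (\<Sum>(i, j)\<in>{(i, j). i \<in> I \<and> j \<in> I \<and> i < j \<and> \<not> E i j}. X i j)"
      using L R PX by simp
  next
    assume H: "(\<Sum>i\<in>I. X i i) \<le> 1 + (\<Sum>(i, j)\<in>{(i, j). i \<in> I \<and> j \<in> I \<and> i < j \<and> \<not> E i j}. X i j)"
    define Q where "Q = X p0 p2 + X p1 p3 + X p2 p4 + X p3 p0 + X p4 p1"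
    have s1: "X p0 p3 = X p3 p0" "X p1 p4 = X p4 p1" "X p2 p0 = X p0 p2" "X p3 p1 = X p1 p3" "X p4 p2 = X p2 p4"
      using sym pI by auto
    have e0: "X p0 p1 = 0" "X p1 p0 = 0" "X p1 p2 = 0" "X p2 p1 = 0" "X p2 p3 = 0" "X p3 p2 = 0"
        "X p3 p4 = 0" "X p4 p3 = 0" "X p4 p0 = 0" "X p0 p4 = 0"
      using edge0 pI Eadj by auto
    have H0: "X p0 p0 + X p1 p1 + X p2 p2 + X p3 p3 + X p4 p4 \<le> 1 + Q"
      using H unfolding SI PX Q_def s1 by linarith
    have ci: "X a j + X b j \<le> X j j" if "a \<in> I" "b \<in> I" "j \<in> I" "a \<noteq> b" "j \<noteq> a" "j \<noteq> b" "E a b" "E b a" for a b j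
    proof -
      have "clique_in E I {a,b}" using that unfolding clique_in_def by auto
      then have "(\<Sum>i\<in>{a,b}. X i j) \<le> X j j" using cond_i that by blast
      then show ?thesis using that by simp
    qed
    have w1: "X p0 p2 + X p3 p0 \<le> X p0 p0" using ci[of p2 p3 p0] pI dist Eadj s1 by (simp add: dist[symmetric])
    have w2: "X p1 p3 + X p4 p1 \<le> X p1 p1" using ci[of p3 p4 p1] pI dist Eadj s1 by (simp add: dist[symmetric])
    have w3: "X p2 p4 + X p0 p2 \<le> X p2 p2" using ci[of p4 p0 p2] pI dist Eadj s1 by (simp add: dist[symmetric])
    have w4: "X p3 p0 + X p1 p3 \<le> X p3 p3" using ci[of p0 p1 p3] pI dist Eadj s1 by (simp add: dist[symmetric])
    have w5: "X p4 p1 + X p2 p4 \<le> X p4 p4" using ci[of p1 p2 p4] pI dist Eadj s1 by (simp add: dist[symmetric])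
    have nn: "X p0 p2 \<ge> 0" "X p1 p3 \<ge> 0" "X p2 p4 \<ge> 0" "X p3 p0 \<ge> 0" "X p4 p1 \<ge> 0"
      using nonneg pI by auto
    define g :: "nat \<Rightarrow> nat \<Rightarrow> real" where "g = (\<lambda>k. if k = 0 then ind {} else if k = 1 then ind {p0}
      else if k = 2 then ind {p1} else if k = 3 then ind {p2} else if k = 4 then ind {p3}
      else if k = 5 then ind {p4} else if k = 6 then ind {p0,p2} else if k = 7 then ind {p1,p3}
      else if k = 8 then ind {p2,p4} else if k = 9 then ind {p3,p0} else ind {p4,p1})"
    define w :: "nat \<Rightarrow> real" where "w = (\<lambda>k. if k = 0 then 1 + Q - (X p0 p0 + X p1 p1 + X p2 p2 + X p3 p3 + X p4 p4)
      else if k = 1 then X p0 p0 - X p0 p2 - X p3 p0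
      else if k = 2 then X p1 p1 - X p1 p3 - X p4 p1
      else if k = 3 then X p2 p2 - X p2 p4 - X p0 p2
      else if k = 4 then X p3 p3 - X p3 p0 - X p1 p3
      else if k = 5 then X p4 p4 - X p4 p1 - X p2 p4
      else if k = 6 then X p0 p2 else if k = 7 then X p1 p3
      else if k = 8 then X p2 p4 else if k = 9 then X p3 p0 else X p4 p1)"
    define K where "K = {0..<11::nat}"
    define F where "F = g ` K"
    define c where "c = (\<lambda>s. \<Sum>k\<in>{k\<in>K. g k = s}. w k)"
    have finK: "finite K" unfolding K_def by simp
    have wnn: "\<forall>k\<in>K. w k \<ge> 0"
      unfolding K_def K11 w_def using H0 w1 w2 w3 w4 w5 nn by auto
    have gst: "\<forall>k\<in>K. g k \<in> stab_vecs E I"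
      unfolding K_def K11 g_def using pI Enon Eirr by (auto intro!: ind_stab)
    have sumw: "(\<Sum>k\<in>K. w k) = 1"
      unfolding K_def K11 w_def Q_def by simp
    have ent: "\<forall>i\<in>I. \<forall>j\<in>I. X i j = (\<Sum>k\<in>K. w k * (g k i * g k j))"
      unfolding K_def K11 g_def w_def ind_def Q_def Ieq using dist s1 e0
      by (simp add: dist[symmetric] algebra_simps)
    show "X \<in> STAB2 E I"
      unfolding STAB2_def
    proof (intro CollectI exI conjI)
      show "finite F" unfolding F_def using finK by simp
      show "F \<subseteq> stab_vecs E I" unfolding F_def using gst by auto
      show "\<forall>s\<in>F. 0 \<le> c s" unfolding c_def using wnn by (auto intro!: sum_nonneg)
      show "sum c F = 1" using image_gen_w[OF finK, where g=g and w=w and q="\<lambda>_. 1"] sumw unfolding F_def c_def by simp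
      show "\<forall>i\<in>I. \<forall>j\<in>I. X i j = (\<Sum>s\<in>F. c s * (s i * s j))"
        using image_gen_w[OF finK, where g=g and w=w] ent unfolding F_def c_def by simp
    qed
  qed
qed


lemma five: "{0..<5::nat} = {0,1,2,3,4}" by (auto; presburger)

theorem lemmaL6:
  fixes n :: nat and E :: "nat \<Rightarrow> nat \<Rightarrow> bool" and I :: "nat set"
    and X :: "nat \<Rightarrow> nat \<Rightarrow> real"
  assumes G: "simple_graph n E"
    and I: "I \<subseteq> {1..n}" "card I = 5" "induced_C5 E I"
    and sym: "\<forall>i\<in>I. \<forall>j\<in>I. X i j = X j i"
    and psd: "\<forall>v :: nat \<Rightarrow> real. (\<Sum>i\<in>I. \<Sum>j\<in>I. v i * X i j * v j) \<ge> 0"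
    and nonneg: "\<forall>i\<in>I. \<forall>j\<in>I. X i j \<ge> 0"
    and edge0: "\<forall>i\<in>I. \<forall>j\<in>I. E i j \<longrightarrow> X i j = 0"
    and cond_i: "\<forall>C1 j. clique_in E I C1 \<and> C1 \<noteq> {} \<and> j \<in> I - C1 \<longrightarrow>
                   (\<Sum>i\<in>C1. X i j) \<le> X j j"
    and cond_ii: "\<forall>C1 C2. clique_in E I C1 \<and> clique_in E I C2 \<and> C1 \<noteq> {} \<and> C2 \<noteq> {}
                   \<and> C1 \<inter> C2 = {} \<longrightarrow>
                   (\<Sum>i\<in>C1 \<union> C2. X i i) \<le> 1 + (\<Sum>i\<in>C1. \<Sum>j\<in>C2. X i j)"
  shows "X \<in> STAB2 E I \<longleftrightarrow>
           (\<Sum>i\<in>I. X i i) \<le> 1 + (\<Sum>(i, j)\<in>{(i, j). i \<in> I \<and> j \<in> I \<and> i < j \<and> \<not> E i j}. X i j)"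
proof -
  obtain f :: "nat \<Rightarrow> nat" where bij: "bij_betw f {0..<5} I"
    and C: "\<forall>a<5. \<forall>b<5. E (f a) (f b) \<longleftrightarrow> (b = (a + 1) mod 5 \<or> a = (b + 1) mod 5)"
    using I(3) unfolding induced_C5_def by blast
  have Ieq: "I = {f 0, f 1, f 2, f 3, f 4}"
    using bij_betw_imp_surj_on[OF bij] unfolding five by auto
  have inj: "inj_on f {0..<5}" using bij bij_betw_imp_inj_on by blast
  have dist: "f 0\<noteq>f 1" "f 0\<noteq>f 2" "f 0\<noteq>f 3" "f 0\<noteq>f 4" "f 1\<noteq>f 2" "f 1\<noteq>f 3" "f 1\<noteq>f 4" "f 2\<noteq>f 3" "f 2\<noteq>f 4" "f 3\<noteq>f 4"
    using inj unfolding five inj_on_def by auto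
  have Esym: "\<forall>i j. E i j = E j i" using G unfolding simple_graph_def by blast
  have Ex: "E (f a) (f b) \<longleftrightarrow> (b = (a + 1) mod 5 \<or> a = (b + 1) mod 5)" if "a < 5" "b < 5" for a b
    using C that by blast
  show ?thesis
    apply (rule core[OF Ieq dist])
    using Ex[of 0 1] Ex[of 1 0] Ex[of 1 2] Ex[of 2 1] Ex[of 2 3] Ex[of 3 2] Ex[of 3 4] Ex[of 4 3]
      Ex[of 4 0] Ex[of 0 4] Ex[of 0 2] Ex[of 2 0] Ex[of 0 3] Ex[of 3 0] Ex[of 1 3] Ex[of 3 1]
      Ex[of 1 4] Ex[of 4 1] Ex[of 2 4] Ex[of 4 2] Ex[of 0 0] Ex[of 1 1] Ex[of 2 2] Ex[of 3 3] Ex[of 4 4]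
      Esym sym nonneg edge0 cond_i by simp_all
qed

end
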